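(* Let $\alpha\in(1,2)$ and let $K\ge3$ be an integer. Then \[ \sigma_{\alpha,K}:=\left(\frac{\left(1-\frac1K\right)^{\frac{1-\alpha}{3-\alpha}}+\left(1+\frac1K\right)^{\frac{1-\alpha}{3-\alpha}}}{2}\right)^{3-\alpha} \] satisfies \[ 1+\frac{\alpha-1}{3-\alpha}\cdot\frac1{K^2}\ \le\ \sigma_{\alpha,K}\ \le\ 1+\frac{7(\alpha-1)}{6(3-\alpha)}\cdot\frac1{K^2}. \] *)

theory Defs
  imports Complex_Main
begin

end

theory Submission
  imports Defs
begin

lemma taylor2:
  fixes f f1 f2 :: "real \<Rightarrow> real"
  assumes h: "0 < h"
    and d1: "\<And>t. 0 \<le> t \<Longrightarrow> t \<le> h \<Longrightarrow> (f has_real_derivative f1 t) (at t)"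
    and d2: "\<And>t. 0 \<le> t \<Longrightarrow> t \<le> h \<Longrightarrow> (f1 has_real_derivative f2 t) (at t)"
  shows "\<exists>t. 0 < t \<and> t < h \<and> f h = f 0 + f1 0 * h + f2 t / 2 * h^2"
proof -
  define diff where "diff = (\<lambda>m::nat. if m = 0 then f else if m = 1 then f1 else f2)"
  have "\<exists>t::real. 0 < t \<and> t < h \<and>
      f h = sum (\<lambda>m. (diff m 0 / fact m) * h ^ m) {..<2} + (diff 2 t / fact 2) * h ^ 2"
    apply (rule Maclaurin[OF h])
    using d1 d2 by (auto simp: diff_def less_2_cases_iff)
  then show ?thesis by (auto simp: diff_def numeral_2_eq_2)
qed

lemma taylor_powr:
  fixes c e h :: real
  assumes h: "0 < h" and pos: "\<And>t. 0 \<le> t \<Longrightarrow> t \<le> h \<Longrightarrow> 1 + c * t > 0"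
  shows "\<exists>t. 0 < t \<and> t < h \<and> (1 + c * h) powr e
     = 1 + e * c * h + e * (e - 1) * c^2 * (1 + c * t) powr (e - 2) / 2 * h^2"
proof -
  have "\<exists>t. 0 < t \<and> t < h \<and> (\<lambda>t. (1 + c * t) powr e) h = (\<lambda>t. (1 + c * t) powr e) 0
     + (\<lambda>t. e * (1 + c * t) powr (e - 1) * c) 0 * h
     + (\<lambda>t. e * (e - 1) * (1 + c * t) powr (e - 2) * c * c) t / 2 * h^2"
  proof (rule taylor2[OF h])
    fix t assume t: "0 \<le> t" "t \<le> h"
    have "DERIV (\<lambda>t. (1 + c * t) powr e) t :> e * (1 + c * t) powr (e - of_nat 1) * c"
      by (rule DERIV_fun_powr) (auto intro!: derivative_eq_intros pos t)
    then show "((\<lambda>t. (1 + c * t) powr e) has_real_derivative e * (1 + c * t) powr (e - 1) * c) (at t)"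
      by simp
    have "DERIV (\<lambda>t. (1 + c * t) powr (e - 1)) t :> (e - 1) * (1 + c * t) powr (e - 1 - of_nat 1) * c"
      by (rule DERIV_fun_powr) (auto intro!: derivative_eq_intros pos t)
    then have "DERIV (\<lambda>t. e * (1 + c * t) powr (e - 1) * c) t :> e * ((e - 1) * (1 + c * t) powr (e - 1 - of_nat 1) * c) * c"
      by (intro DERIV_cmult DERIV_cmult_right) 
    then show "((\<lambda>t. e * (1 + c * t) powr (e - 1) * c) has_real_derivative e * (e - 1) * (1 + c * t) powr (e - 2) * c * c) (at t)"
      by (simp add: algebra_simps)
  qed
  then show ?thesis by (auto simp: power2_eq_square algebra_simps)
qed

lemma taylor_sym:
  fixes r x :: real
  assumes x: "0 < x" "x < 1"
  shows "\<exists>t. 0 < t \<and> t < x \<and> (1 + x) powr r + (1 - x) powr r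
     = 2 + r * (r - 1) * ((1 + t) powr (r - 2) + (1 - t) powr (r - 2)) / 2 * x^2"
proof -
  have "\<exists>t. 0 < t \<and> t < x \<and> (\<lambda>t. (1 + t) powr r + (1 - t) powr r) x = (\<lambda>t. (1 + t) powr r + (1 - t) powr r) 0
     + (\<lambda>t. r * (1 + t) powr (r - 1) - r * (1 - t) powr (r - 1)) 0 * x
     + (\<lambda>t. r * (r - 1) * ((1 + t) powr (r - 2) + (1 - t) powr (r - 2))) t / 2 * x^2"
  proof (rule taylor2[OF x(1)])
    fix t assume t: "0 \<le> t" "t \<le> x"
    then have p1: "1 + t > 0" and p2: "1 - t > 0" using x by auto
    have a: "DERIV (\<lambda>t. (1 + t) powr r) t :> r * (1 + t) powr (r - of_nat 1) * 1"
      by (rule DERIV_fun_powr) (use p1 in \<open>auto intro!: derivative_eq_intros\<close>)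
    have b: "DERIV (\<lambda>t. (1 - t) powr r) t :> r * (1 - t) powr (r - of_nat 1) * (-1)"
      by (rule DERIV_fun_powr) (use p2 in \<open>auto intro!: derivative_eq_intros\<close>)
    show "((\<lambda>t. (1 + t) powr r + (1 - t) powr r) has_real_derivative r * (1 + t) powr (r - 1) - r * (1 - t) powr (r - 1)) (at t)"
      using DERIV_add[OF a b] by simp
    have a: "DERIV (\<lambda>t. (1 + t) powr (r - 1)) t :> (r - 1) * (1 + t) powr (r - 1 - of_nat 1) * 1"
      by (rule DERIV_fun_powr) (use p1 in \<open>auto intro!: derivative_eq_intros\<close>)
    have b: "DERIV (\<lambda>t. (1 - t) powr (r - 1)) t :> (r - 1) * (1 - t) powr (r - 1 - of_nat 1) * (-1)"
      by (rule DERIV_fun_powr) (use p2 in \<open>auto intro!: derivative_eq_intros\<close>)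
    have "DERIV (\<lambda>t. r * (1 + t) powr (r - 1) - r * (1 - t) powr (r - 1)) t :>
        r * ((r - 1) * (1 + t) powr (r - 1 - of_nat 1) * 1) - r * ((r - 1) * (1 - t) powr (r - 1 - of_nat 1) * (-1))"
      by (intro DERIV_diff DERIV_cmult a b)
    then show "((\<lambda>t. r * (1 + t) powr (r - 1) - r * (1 - t) powr (r - 1)) has_real_derivative
        r * (r - 1) * ((1 + t) powr (r - 2) + (1 - t) powr (r - 2))) (at t)"
      by (simp add: algebra_simps)
  qed
  then show ?thesis by auto
qed

lemma amgm_powr:
  fixes e t :: real
  assumes "e \<le> 0" "0 \<le> t" "t < 1"
  shows "(1 + t) powr e + (1 - t) powr e \<ge> 2"
proof -
  define a where "a = (1 + t) powr e"
  define b where "b = (1 - t) powr e"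
  have a: "a > 0" and b: "b > 0" using assms by (auto simp: a_def b_def)
  have "a * b = (1 - t^2) powr e"
    using assms by (simp add: a_def b_def powr_mult[symmetric] power2_eq_square algebra_simps)
  also have "\<dots> = inverse ((1 - t^2) powr (-e))"
    using assms by (simp add: powr_minus)
  also have "\<dots> \<ge> 1"
  proof -
    have t2: "0 < 1 - t^2" "1 - t^2 \<le> 1" using assms by (auto simp: power_less_one_iff abs_square_less_1)
    have "(1 - t^2) powr (-e) \<le> 1" using t2 assms by (intro powr_le1) auto
    moreover have "(1 - t^2) powr (-e) > 0" using t2 by simp
    ultimately show ?thesis by (simp add: one_le_inverse_iff)
  qed
  finally have ab: "a * b \<ge> 1" .
  have "(a + b)^2 = (a - b)^2 + 4 * (a * b)" by (simp add: power2_eq_square algebra_simps)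
  also have "\<dots> \<ge> 4" using ab by (smt (verit) zero_le_power2)
  finally have sq: "(a + b)^2 \<ge> 4" .
  have "a + b \<ge> 2"
  proof (rule ccontr)
    assume "\<not> 2 \<le> a + b"
    then have "(a + b)^2 < 2^2" using a b by (intro power_strict_mono) auto
    then show False using sq by simp
  qed
  then show ?thesis by (simp add: a_def b_def)
qed

lemma final_arith:
  fixes s y q U :: real
  assumes s: "0 < s" "s < 1" and y: "0 < y" "y \<le> 1/9" and q: "q * (1 + s) = 2"
    and U0: "0 \<le> U"
    and U1: "U \<le> (1 - s*(1-s)*y/2) * (1 + s*y + s*(1+s)/2*(729/512)*y^2) - 1"
  shows "q*U + q*(q-1)/2*U^2 \<le> 7/6*s*y"
proof -
  define c :: real where "c = 729/512"
  define U2 where "U2 = s*(1+s)*y*(1/2 + c*y/2) - s^2*(1-s)*y^2/2"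
  define U3 where "U3 = s*(1+s)*y*(1/2 + c*y/2)"
  have qdef: "q = 2/(1+s)" using q s by (simp add: field_simps)
  have "(1 - s*(1-s)*y/2) * (1 + s*y + s*(1+s)/2*(729/512)*y^2) - 1
      = U2 - (s*(1-s)*y/2) * (s*(1+s)*c*y^2/2)"
    by (simp add: U2_def c_def power2_eq_square field_simps)
  also have "\<dots> \<le> U2" using s y by (simp add: c_def)
  finally have UU2: "U \<le> U2" using U1 by simp
  have U23: "U2 \<le> U3" unfolding U2_def U3_def using s y by simp
  have q1: "q \<ge> 1" unfolding qdef using s by (simp add: field_simps)
  have "q*U \<le> q*U2" using UU2 q1 by (intro mult_left_mono) auto
  moreover have "U^2 \<le> U3^2" using UU2 U23 U0 by (intro power_mono) auto
  then have "q*(q-1)/2*U^2 \<le> q*(q-1)/2*U3^2" using q1 by (intro mult_left_mono) auto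
  moreover have "q*U2 = s*y*(1 + c*y) - (1-s)*s^2*y^2*(1/(1+s))"
    unfolding qdef U2_def using s by (simp add: field_simps power2_eq_square)
  moreover have "q*(q-1)/2*U3^2 = (1-s)*s^2*y^2*(1/2+c*y/2)^2"
  proof -
    have hs: "1 + s > 0" using s by simp
    have qm1: "q - 1 = (1-s)/(1+s)" unfolding qdef using hs by (simp add: field_simps)
    have "q*(q-1)/2 = (2/(1+s))*((1-s)/(1+s))/2" using qm1 qdef by simp
    also have "\<dots> = (1-s)/(1+s)^2" by (simp add: power2_eq_square field_split_simps)
    finally have qq: "q*(q-1)/2 = (1-s)/(1+s)^2" .
    have "U3^2 = (1+s)^2*(s^2*y^2*(1/2+c*y/2)^2)" unfolding U3_def by (simp add: power_mult_distrib)
    then show ?thesis using qq s by simp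
  qed
  moreover have "s*y*(1 + c*y) \<le> s*y*(7/6)" using s y by (intro mult_left_mono) (auto simp: c_def)
  moreover have "(1-s)*s^2*y^2*(1/2+c*y/2)^2 \<le> (1-s)*s^2*y^2*(1/(1+s))"
  proof (intro mult_left_mono)
    have "(1/2+c*y/2)^2 \<le> (1/2 + c*(1/9)/2)^2" using y by (intro power_mono) (auto simp: c_def)
    also have "\<dots> \<le> 1/2" by (simp add: c_def power2_eq_square)
    also have "1/2 \<le> 1/(1+s)" using s by (simp add: field_simps)
    finally show "(1/2+c*y/2)^2 \<le> 1/(1+s)" .
  qed (use s in auto)
  ultimately show ?thesis by linarith
qed

theorem proposition2:
  fixes \<alpha> :: real and K :: nat
  assumes "1 < \<alpha>" and "\<alpha> < 2" and "K \<ge> 3"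
  shows "1 + (\<alpha> - 1) / (3 - \<alpha>) * (1 / real K ^ 2)
           \<le> ((((1 - 1 / real K) powr ((1 - \<alpha>) / (3 - \<alpha>))
                + (1 + 1 / real K) powr ((1 - \<alpha>) / (3 - \<alpha>))) / 2) powr (3 - \<alpha>))
         \<and> ((((1 - 1 / real K) powr ((1 - \<alpha>) / (3 - \<alpha>))
                + (1 + 1 / real K) powr ((1 - \<alpha>) / (3 - \<alpha>))) / 2) powr (3 - \<alpha>))
           \<le> 1 + 7 * (\<alpha> - 1) / (6 * (3 - \<alpha>)) * (1 / real K ^ 2)"
proof -
  define x where "x = 1 / real K"
  define s where "s = (\<alpha> - 1) / (3 - \<alpha>)"
  define q where "q = 3 - \<alpha>"
  have K3: "real K \<ge> 3" using assms(3) by simp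
  have x0: "0 < x" using K3 by (simp add: x_def)
  have x13: "x \<le> 1/3" using K3 by (simp add: x_def field_simps)
  have x1: "x < 1" using x13 by simp
  have s0: "0 < s" using assms by (simp add: s_def)
  have s1: "s < 1" using assms by (simp add: s_def field_simps)
  have qs: "q * (1 + s) = 2" using assms by (simp add: s_def q_def field_simps)
  have q1: "1 \<le> q" using assms by (simp add: q_def)
  have pe: "(1 - \<alpha>) / (3 - \<alpha>) = - s" unfolding s_def minus_divide_left by simp
  define y where "y = x^2"
  have y0: "0 < y" using x0 by (simp add: y_def)
  have y19: "y \<le> 1/9"
  proof -
    have "x^2 \<le> (1/3)^2" using x0 x13 by (intro power_mono) auto
    then show ?thesis by (simp add: y_def power2_eq_square)
  qed
  define M where "M = ((1 - x) powr (-s) + (1 + x) powr (-s)) / 2"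
  have e1: "1 + (\<alpha> - 1) / (3 - \<alpha>) * (1 / real K ^ 2) = 1 + s * y"
    by (simp add: s_def y_def x_def power_one_over)
  have e2: "1 + 7 * (\<alpha> - 1) / (6 * (3 - \<alpha>)) * (1 / real K ^ 2) = 1 + 7/6 * s * y"
    by (simp add: s_def y_def x_def power_one_over field_simps)
  have e3: "((((1 - 1 / real K) powr ((1 - \<alpha>) / (3 - \<alpha>))
                + (1 + 1 / real K) powr ((1 - \<alpha>) / (3 - \<alpha>))) / 2) powr (3 - \<alpha>)) = M powr q"
    unfolding pe M_def q_def x_def by simp
  obtain t where t: "0 < t" "t < x" and teq: "(1 + x) powr (-s) + (1 - x) powr (-s)
     = 2 + (-s) * (-s - 1) * ((1 + t) powr (-s - 2) + (1 - t) powr (-s - 2)) / 2 * x^2"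
    using taylor_sym[OF x0 x1, of "-s"] by blast
  have A: "(1 + t) powr (-s - 2) + (1 - t) powr (-s - 2) \<ge> 2"
    using t x1 s0 by (intro amgm_powr) auto
  define u0 where "u0 = s * (1 + s) / 2 * y"
  have u0: "0 < u0" using s0 y0 by (simp add: u0_def)
  have Mlow: "M \<ge> 1 + u0"
  proof -
    have "s * (1 + s) * 2 \<le> s * (1 + s) * ((1 + t) powr (-s - 2) + (1 - t) powr (-s - 2))"
      using A s0 by (intro mult_left_mono) auto
    then have "s * (1 + s) * 2 / 2 * x^2 \<le> s * (1 + s) * ((1 + t) powr (-s - 2) + (1 - t) powr (-s - 2)) / 2 * x^2"
      by (intro mult_right_mono divide_right_mono) auto
    then show ?thesis using teq unfolding M_def u0_def y_def by (simp add: algebra_simps)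
  qed
  obtain t2 where t2: "0 < t2" "t2 < u0" and t2eq: "(1 + 1 * u0) powr q
     = 1 + q * 1 * u0 + q * (q - 1) * 1^2 * (1 + 1 * t2) powr (q - 2) / 2 * u0^2"
    using taylor_powr[OF u0, of 1 q] by force
  have "q * (q - 1) * 1^2 * (1 + 1 * t2) powr (q - 2) / 2 * u0^2 \<ge> 0"
    using q1 by simp
  then have b1: "(1 + u0) powr q \<ge> 1 + q * u0" using t2eq by simp
  have qu0: "q * u0 = s * y" unfolding u0_def using qs
    by (metis (no_types, lifting) mult.assoc mult.commute nonzero_mult_div_cancel_left times_divide_eq_left zero_neq_numeral)
  have low: "1 + s * y \<le> M powr q"
  proof -
    have "(1 + u0) powr q \<le> M powr q" using Mlow u0 q1 by (intro powr_mono2) auto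
    then show ?thesis using b1 qu0 by simp
  qed
  obtain t3 where t3: "0 < t3" "t3 < x" and t3eq: "(1 + x) powr s + (1 - x) powr s
     = 2 + s * (s - 1) * ((1 + t3) powr (s - 2) + (1 - t3) powr (s - 2)) / 2 * x^2"
    using taylor_sym[OF x0 x1, of s] by blast
  have A3: "(1 + t3) powr (s - 2) + (1 - t3) powr (s - 2) \<ge> 2"
    using t3 x1 s1 by (intro amgm_powr) auto
  define N where "N = (1 + x) powr s + (1 - x) powr s"
  have Nle: "N \<le> 2 - s * (1 - s) * y"
  proof -
    define B where "B = (1 + t3) powr (s - 2) + (1 - t3) powr (s - 2)"
    have "s * (1 - s) * 2 \<le> s * (1 - s) * B"
      using A3 s0 s1 unfolding B_def by (intro mult_left_mono) auto
    then have h1: "s * (1 - s) * 2 / 2 * x^2 \<le> s * (1 - s) * B / 2 * x^2"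
      by (intro mult_right_mono divide_right_mono) auto
    have h2: "s * (s - 1) * B / 2 * x^2 = - (s * (1 - s) * B / 2 * x^2)" by (simp add: field_simps)
    have h3: "s * (1 - s) * 2 / 2 * x^2 = s * (1 - s) * y" by (simp add: y_def)
    have "N = 2 + s * (s - 1) * B / 2 * x^2" using t3eq unfolding N_def B_def .
    then show ?thesis using h1 h2 h3 by linarith
  qed
  define W where "W = (1 - y) powr (-s)"
  have W0: "W \<ge> 0" by (simp add: W_def)
  have xm: "1 - x > 0" "1 + x > 0" using x0 x1 by auto
  have MNW: "M = N * W / 2"
  proof -
    have Wm: "W = (1 - x) powr (-s) * (1 + x) powr (-s)"
      unfolding W_def y_def by (simp add: powr_mult[symmetric] power2_eq_square algebra_simps)
    have i1: "(1 - x) powr s * (1 - x) powr (-s) = 1"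
      using xm by (simp add: powr_add[symmetric])
    have i2: "(1 + x) powr s * (1 + x) powr (-s) = 1"
      using xm by (simp add: powr_add[symmetric])
    have "N * W = (1 + x) powr s * (1 + x) powr (-s) * (1 - x) powr (-s)
        + (1 - x) powr s * (1 - x) powr (-s) * (1 + x) powr (-s)"
      unfolding N_def Wm by (simp add: algebra_simps)
    also have "\<dots> = (1 - x) powr (-s) + (1 + x) powr (-s)" using i1 i2 by simp
    finally show ?thesis unfolding M_def by simp
  qed
  have y1: "y < 1" using y19 by simp
  obtain t4 where t4: "0 < t4" "t4 < y" and t4eq: "(1 + (-1) * y) powr (-s)
     = 1 + (-s) * (-1) * y + (-s) * (-s - 1) * (-1)^2 * (1 + (-1) * t4) powr (-s - 2) / 2 * y^2"
    using taylor_powr[OF y0, of "-1" "-s"] y1 by force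
  have bnd: "(1 - t4) powr (-s - 2) \<le> 729/512"
  proof -
    have b0: "0 < 1 - t4" "1 - t4 \<le> 1" using t4 y1 by auto
    have "(1 - t4) ^ 3 \<le> (1 - t4) powr (s + 2)"
      using powr_mono'[of "s + 2" 3 "1 - t4"] b0 s1 by simp
    moreover have "(8/9::real)^3 \<le> (1 - t4)^3" using t4 y19 by (intro power_mono) auto
    ultimately have g: "(8/9::real)^3 \<le> (1 - t4) powr (s + 2)" by linarith
    have "(1 - t4) powr (-s - 2) = inverse ((1 - t4) powr (s + 2))"
      by (simp add: powr_minus[symmetric])
    also have "\<dots> \<le> inverse ((8/9::real)^3)" using g by (intro le_imp_inverse_le) auto
    also have "\<dots> = 729/512" by (simp add: power3_eq_cube inverse_eq_divide)
    finally show ?thesis .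
  qed
  have WE: "W \<le> 1 + s*y + s*(1+s)/2*(729/512)*y^2"
  proof -
    have "s * (1 + s) * (1 - t4) powr (-s - 2) \<le> s * (1 + s) * (729/512)"
      using bnd s0 by (intro mult_left_mono) auto
    then have "s * (1 + s) * (1 - t4) powr (-s - 2) / 2 * y^2 \<le> s * (1 + s) * (729/512) / 2 * y^2"
      by (intro mult_right_mono divide_right_mono) auto
    then show ?thesis using t4eq unfolding W_def by (simp add: algebra_simps)
  qed
  define U where "U = M - 1"
  have U0: "U > 0" using Mlow u0 by (simp add: U_def)
  have U1: "U \<le> (1 - s*(1-s)*y/2) * (1 + s*y + s*(1+s)/2*(729/512)*y^2) - 1"
  proof -
    have c0: "0 \<le> 2 - s * (1 - s) * y"
    proof -
      have "s * (1 - s) \<le> 1 * 1" using s0 s1 by (intro mult_mono) auto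
      then have "s * (1 - s) * y \<le> 1 * 1" using y0 y1 s0 s1 by (intro mult_mono) auto
      then show ?thesis by simp
    qed
    have "N * W \<le> (2 - s * (1 - s) * y) * W" using Nle W0 by (intro mult_right_mono)
    also have "\<dots> \<le> (2 - s * (1 - s) * y) * (1 + s*y + s*(1+s)/2*(729/512)*y^2)"
      using WE c0 by (intro mult_left_mono)
    finally have "M \<le> (2 - s * (1 - s) * y) * (1 + s*y + s*(1+s)/2*(729/512)*y^2) / 2"
      unfolding MNW by (intro divide_right_mono) auto
    moreover have "(2 - s * (1 - s) * y) * (1 + s*y + s*(1+s)/2*(729/512)*y^2) / 2
       = (1 - s*(1-s)*y/2) * (1 + s*y + s*(1+s)/2*(729/512)*y^2)"
      by (simp only: times_divide_eq_left[symmetric] mult.commute[of _ "1/2"]) (simp add: field_simps)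
    ultimately show ?thesis unfolding U_def by linarith
  qed
  obtain t5 where t5: "0 < t5" "t5 < U" and t5eq: "(1 + 1 * U) powr q
     = 1 + q * 1 * U + q * (q - 1) * 1^2 * (1 + 1 * t5) powr (q - 2) / 2 * U^2"
    using taylor_powr[OF U0, of 1 q] by force
  have "(1 + t5) powr (q - 2) \<le> (1 + t5) powr 0"
    using t5 assms by (intro powr_mono) (auto simp: q_def)
  then have "(1 + t5) powr (q - 2) \<le> 1" using t5 by simp
  then have "q * (q - 1) / 2 * U^2 * (1 + t5) powr (q - 2) \<le> q * (q - 1) / 2 * U^2 * 1"
    using q1 by (intro mult_left_mono) auto
  then have "M powr q \<le> 1 + q * U + q * (q - 1) / 2 * U^2"
    using t5eq unfolding U_def by (simp add: algebra_simps)
  also have "\<dots> \<le> 1 + 7/6*s*y"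
    using final_arith[OF s0 s1 y0 y19 qs _ U1] U0 by simp
  finally have up: "M powr q \<le> 1 + 7/6*s*y" .
  show ?thesis unfolding e1 e2 e3 using low up by simp
qed

end
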